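(* Let $S$ be an AG-groupoid that satisfies both $a(bc)=(ab)(ca)$ and $(ab)c=(ca)(bc)$ for all $a,b,c\in S$. Then $S$ is a semigroup, i.e. $a(bc)=(ab)c$ for all $a,b,c\in S$.
   Context: A groupoid is a set $S$ with a binary operation written as juxtaposition. An AG-groupoid is a groupoid satisfying the left invertive law $(ab)c=(cb)a$ for all $a,b,c\in S$. Such an $S$ satisfying both identities in the claim (left abelian distributive and right abelian distributive) is called an AD-AG-groupoid. *)

theory Defs
  imports Main
begin

definition AG_groupoid :: "('a \<Rightarrow> 'a \<Rightarrow> 'a) \<Rightarrow> bool" where
  "AG_groupoid m \<longleftrightarrow> (\<forall>a b c. m (m a b) c = m (m c b) a)"

definition left_abelian_distributive :: "('a \<Rightarrow> 'a \<Rightarrow> 'a) \<Rightarrow> bool" where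
  "left_abelian_distributive m \<longleftrightarrow> (\<forall>a b c. m a (m b c) = m (m a b) (m c a))"

definition right_abelian_distributive :: "('a \<Rightarrow> 'a \<Rightarrow> 'a) \<Rightarrow> bool" where
  "right_abelian_distributive m \<longleftrightarrow> (\<forall>a b c. m (m a b) c = m (m c a) (m b c))"

end

theory Submission
  imports Defs
begin

lemma aux:
  assumes A: "\<And>a b c. m (m a b) c = m (m c b) a"
    and L: "\<And>a b c. m a (m b c) = m (m a b) (m c a)"
    and R: "\<And>a b c. m (m a b) c = m (m c a) (m b c)"
  shows "m a (m b c) = m (m a b) c"
  by (metis A L R)

theorem mainTheorem7:
  fixes m :: "'a \<Rightarrow> 'a \<Rightarrow> 'a"
  assumes "AG_groupoid m"
    and "left_abelian_distributive m"
    and "right_abelian_distributive m"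
  shows "\<forall>a b c. m a (m b c) = m (m a b) c"
  using assms unfolding AG_groupoid_def left_abelian_distributive_def right_abelian_distributive_def
  by (blast intro: aux)

end
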